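(* Let $\Lambda$ be a left cancellative small category, $v\in\Lambda^0$, and $C\in v\Lambda^*$. Then $C\in v\partial\Lambda$ if and only if: for every finite $\mathcal F\subseteq\mathcal D^{(0)}_v$ that does not cover $C$ and every $E\in C$, there exists $G\in\mathcal D^{(0)}_v$ with $G\subseteq E\setminus\bigcup\mathcal F$.
   Context: A left cancellative small category (LCSC) is a small category $\Lambda$ such that $\alpha\beta=\alpha\gamma$ implies $\beta=\gamma$. Composition $\alpha\beta$ is defined when $s(\alpha)=r(\beta)$; $\Lambda^0$ is the set of objects; $v\Lambda=\{\alpha:r(\alpha)=v\}$. For $\alpha\in\Lambda$, $\tau^\alpha(\beta)=\alpha\beta$ on $s(\alpha)\Lambda$ and $\sigma^\alpha:\alpha\Lambda\to s(\alpha)\Lambda$ is its inverse. A zigzag is a tuple $\zeta=(\alpha_1,\beta_1,\dots,\alpha_n,\beta_n)$ with $r(\alpha_i)=r(\beta_i)$ and $s(\alpha_{i+1})=s(\beta_i)$, $s(\zeta)=s(\beta_n)$; the zigzag map $\varphi_\zeta=\sigma^{\alpha_1}\circ\tau^{\beta_1}\circ\cdots\circ\sigma^{\alpha_n}\circ\tau^{\beta_n}$ (partial map) has domain $A(\zeta)\subseteq s(\zeta)\Lambda$. $\mathcal D^{(0)}_v$ is the set of nonempty $A(\zeta)$ with $s(\zeta)=v$, and $\mathcal A_v$ the ring of subsets of $v\Lambda$ generated by it. A filter in $\mathcal D^{(0)}_v$ is a nonempty $C\subseteq\mathcal D^{(0)}_v$ closed under intersection and under supersets within $\mathcal D^{(0)}_v$.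 A finite $\mathcal F\subseteq\mathcal D^{(0)}_v$ covers the filter $C$ if some $E\in C$ satisfies $E\subseteq\bigcup\mathcal F$. $v\Lambda^*$ is the set of filters $C$ in $\mathcal D^{(0)}_v$ such that every finite $\mathcal F\subseteq\mathcal D^{(0)}_v$ with $\mathcal F\cap C=\varnothing$ does not cover $C$; $v\Lambda^{**}$ is its set of maximal elements. $v\Lambda^*$ is identified with the space $X_v$ of ultrafilters of the ring $\mathcal A_v$ via $C\mapsto\mathcal U_C$, the unique ultrafilter of $\mathcal A_v$ with $\mathcal U_C\cap\mathcal D^{(0)}_v=C$ (generated by the sets $E\setminus\bigcup\mathcal F$, $E\in C$, $\mathcal F$ finite not covering $C$); $X_v$ carries the topology with compact open basis $\widehat A=\{C: A\in\mathcal U_C\}$, $A\in\mathcal A_v$. The boundary $v\partial\Lambda$ is the closure of $v\Lambda^{**}$ in $X_v$. *)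

theory Defs
  imports "HOL-Analysis.Analysis"
begin

text \<open>A small category: a set of morphisms, the objects are identified with the
identity morphisms (a subset of the morphisms), range/source maps and a composition
(only meaningful when src a = rng b).\<close>

record 'a cat =
  mor  :: "'a set"
  obj  :: "'a set"
  rng  :: "'a \<Rightarrow> 'a"
  src  :: "'a \<Rightarrow> 'a"
  comp :: "'a \<Rightarrow> 'a \<Rightarrow> 'a"

definition small_category :: "'a cat \<Rightarrow> bool" where
  "small_category L \<longleftrightarrow>
     obj L \<subseteq> mor L \<and>
     (\<forall>a\<in>mor L. rng L a \<in> obj L \<and> src L a \<in> obj L) \<and>
     (\<forall>v\<in>obj L. rng L v = v \<and> src L v = v) \<and>
     (\<forall>a\<in>mor L. \<forall>b\<in>mor L. src L a = rng L b \<longrightarrow>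
        comp L a b \<in> mor L \<and> rng L (comp L a b) = rng L a \<and> src L (comp L a b) = src L b) \<and>
     (\<forall>a\<in>mor L. comp L (rng L a) a = a \<and> comp L a (src L a) = a) \<and>
     (\<forall>a\<in>mor L. \<forall>b\<in>mor L. \<forall>c\<in>mor L. src L a = rng L b \<longrightarrow> src L b = rng L c \<longrightarrow>
        comp L (comp L a b) c = comp L a (comp L b c))"

definition LCSC :: "'a cat \<Rightarrow> bool" where
  "LCSC L \<longleftrightarrow> small_category L \<and>
     (\<forall>a\<in>mor L. \<forall>b\<in>mor L. \<forall>c\<in>mor L. src L a = rng L b \<longrightarrow> src L a = rng L c \<longrightarrow>
        comp L a b = comp L a c \<longrightarrow> b = c)"

definition vL :: "'a cat \<Rightarrow> 'a \<Rightarrow> 'a set" where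
  "vL L v = {a \<in> mor L. rng L a = v}"

text \<open>A zigzag (a1,b1,...,an,bn) is the nonempty list [(a1,b1),...,(an,bn)].\<close>

definition zigzag :: "'a cat \<Rightarrow> ('a \<times> 'a) list \<Rightarrow> bool" where
  "zigzag L z \<longleftrightarrow> z \<noteq> [] \<and>
     (\<forall>(a,b)\<in>set z. a \<in> mor L \<and> b \<in> mor L \<and> rng L a = rng L b) \<and>
     (\<forall>i. Suc i < length z \<longrightarrow> src L (fst (z ! Suc i)) = src L (snd (z ! i)))"

definition zsrc :: "'a cat \<Rightarrow> ('a \<times> 'a) list \<Rightarrow> 'a" where
  "zsrc L z = src L (snd (last z))"

text \<open>The partial map sigma^a o tau^b o (rest), applied right to left; None = undefined.\<close>
fun zmap :: "'a cat \<Rightarrow> ('a \<times> 'a) list \<Rightarrow> 'a \<Rightarrow> 'a option" where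
  "zmap L [] x = Some x"
| "zmap L ((a, b) # z) x =
     (case zmap L z x of
        None \<Rightarrow> None
      | Some y \<Rightarrow>
          (if y \<in> mor L \<and> rng L y = src L b \<and>
              (\<exists>g\<in>mor L. rng L g = src L a \<and> comp L a g = comp L b y)
           then Some (THE g. g \<in> mor L \<and> rng L g = src L a \<and> comp L a g = comp L b y)
           else None))"

definition Adom :: "'a cat \<Rightarrow> ('a \<times> 'a) list \<Rightarrow> 'a set" where
  "Adom L z = {x \<in> vL L (zsrc L z). zmap L z x \<noteq> None}"

definition D0 :: "'a cat \<Rightarrow> 'a \<Rightarrow> 'a set set" where
  "D0 L v = {Adom L z | z. zigzag L z \<and> zsrc L z = v \<and> Adom L z \<noteq> {}}"

definition Aring :: "'a cat \<Rightarrow> 'a \<Rightarrow> 'a set set" where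
  "Aring L v = \<Inter>{M. ring_of_sets (vL L v) M \<and> D0 L v \<subseteq> M}"

definition D0_filter :: "'a cat \<Rightarrow> 'a \<Rightarrow> 'a set set \<Rightarrow> bool" where
  "D0_filter L v C \<longleftrightarrow> C \<noteq> {} \<and> C \<subseteq> D0 L v \<and>
     (\<forall>E\<in>C. \<forall>F\<in>C. E \<inter> F \<in> C) \<and>
     (\<forall>E\<in>C. \<forall>F\<in>D0 L v. E \<subseteq> F \<longrightarrow> F \<in> C)"

definition covers :: "'a set set \<Rightarrow> 'a set set \<Rightarrow> bool" where
  "covers \<F> C \<longleftrightarrow> (\<exists>E\<in>C. E \<subseteq> \<Union>\<F>)"

definition Lstar :: "'a cat \<Rightarrow> 'a \<Rightarrow> 'a set set set" where
  "Lstar L v = {C. D0_filter L v C \<and>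
     (\<forall>\<F>. finite \<F> \<and> \<F> \<subseteq> D0 L v \<and> \<F> \<inter> C = {} \<longrightarrow> \<not> covers \<F> C)}"

definition Lstarstar :: "'a cat \<Rightarrow> 'a \<Rightarrow> 'a set set set" where
  "Lstarstar L v = {C \<in> Lstar L v. \<forall>C'\<in>Lstar L v. C \<subseteq> C' \<longrightarrow> C' = C}"

definition ring_filter :: "'b set set \<Rightarrow> 'b set set \<Rightarrow> bool" where
  "ring_filter M U \<longleftrightarrow> U \<subseteq> M \<and> U \<noteq> {} \<and> {} \<notin> U \<and>
     (\<forall>A\<in>U. \<forall>B\<in>U. A \<inter> B \<in> U) \<and> (\<forall>A\<in>U. \<forall>B\<in>M. A \<subseteq> B \<longrightarrow> B \<in> U)"

definition ring_ultrafilter :: "'b set set \<Rightarrow> 'b set set \<Rightarrow> bool" where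
  "ring_ultrafilter M U \<longleftrightarrow> ring_filter M U \<and> (\<forall>U'. ring_filter M U' \<and> U \<subseteq> U' \<longrightarrow> U' = U)"

definition Xv :: "'a cat \<Rightarrow> 'a \<Rightarrow> 'a set set set" where
  "Xv L v = {U. ring_ultrafilter (Aring L v) U}"

definition UC :: "'a cat \<Rightarrow> 'a \<Rightarrow> 'a set set \<Rightarrow> 'a set set" where
  "UC L v C = (THE U. U \<in> Xv L v \<and> U \<inter> D0 L v = C)"

definition Xtop :: "'a cat \<Rightarrow> 'a \<Rightarrow> 'a set set topology" where
  "Xtop L v = topology_generated_by {{U \<in> Xv L v. A \<in> U} | A. A \<in> Aring L v}"

definition boundary :: "'a cat \<Rightarrow> 'a \<Rightarrow> 'a set set set" where
  "boundary L v = Xtop L v closure_of (UC L v ` Lstarstar L v)"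

end

theory Submission
  imports Defs
begin


definition okp :: "'a cat \<Rightarrow> 'a \<times> 'a \<Rightarrow> bool" where
  "okp L p \<longleftrightarrow> fst p \<in> mor L \<and> snd p \<in> mor L \<and> rng L (fst p) = rng L (snd p)"

lemma zigzag_alt:
  "zigzag L z \<longleftrightarrow> z \<noteq> [] \<and> (\<forall>p\<in>set z. okp L p) \<and>
     successively (\<lambda>p q. src L (fst q) = src L (snd p)) z"
proof -
  have s: "successively P z \<longleftrightarrow> (\<forall>i. Suc i < length z \<longrightarrow> P (z ! i) (z ! Suc i))" for P :: "'a\<times>'a \<Rightarrow> 'a\<times>'a \<Rightarrow> bool"
  proof (induction z)
    case Nil then show ?case by simp
  next
    case (Cons a z)
    show ?case
    proof (cases z)
      case Nil then show ?thesis by simp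
    next
      case (Cons b w)
      have "(\<forall>i. Suc i < length (a # z) \<longrightarrow> P ((a # z) ! i) ((a # z) ! Suc i)) \<longleftrightarrow>
            P a b \<and> (\<forall>i. Suc i < length z \<longrightarrow> P (z ! i) (z ! Suc i))"
      proof -
        have sp: "(\<forall>i. Q i) \<longleftrightarrow> Q 0 \<and> (\<forall>i. Q (Suc i))" for Q :: "nat \<Rightarrow> bool"
          by (metis not0_implies_Suc)
        show ?thesis by (subst sp) (simp add: Cons)
      qed
      then show ?thesis using Cons.IH Cons by simp
    qed
  qed
  show ?thesis unfolding zigzag_def s okp_def by (auto simp: case_prod_beta)
qed

lemma zmap_append:
  "zmap L (z1 @ z2) x = (case zmap L z2 x of None \<Rightarrow> None | Some y \<Rightarrow> zmap L z1 y)"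
proof (induction z1)
  case Nil then show ?case by (simp split: option.split)
next
  case (Cons p z1)
  obtain a b where p: "p = (a,b)" by fastforce
  show ?case using Cons by (simp add: p split: option.split)
qed

lemma zmap_Cons': "zmap L (p # z) x = (case zmap L z x of None \<Rightarrow> None | Some y \<Rightarrow> zmap L [p] y)"
  using zmap_append[of L "[p]" z x] by simp

lemma lcsc_cancel:
  assumes "LCSC L" "a \<in> mor L" "g1 \<in> mor L" "g2 \<in> mor L" "rng L g1 = src L a" "rng L g2 = src L a"
    "comp L a g1 = comp L a g2"
  shows "g1 = g2"
  using assms unfolding LCSC_def by metis

lemma step_some:
  assumes "LCSC L" "a \<in> mor L" "zmap L [(a,b)] y = Some g"
  shows "y \<in> mor L \<and> rng L y = src L b \<and> g \<in> mor L \<and> rng L g = src L a \<and> comp L a g = comp L b y"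
proof -
  have c: "y \<in> mor L \<and> rng L y = src L b \<and> (\<exists>g\<in>mor L. rng L g = src L a \<and> comp L a g = comp L b y)"
    and g: "g = (THE g. g \<in> mor L \<and> rng L g = src L a \<and> comp L a g = comp L b y)"
    using assms(3) by (auto split: if_splits)
  then obtain g0 where g0: "g0 \<in> mor L" "rng L g0 = src L a" "comp L a g0 = comp L b y" by blast
  have "(THE g. g \<in> mor L \<and> rng L g = src L a \<and> comp L a g = comp L b y) = g0"
    apply (rule the_equality)
    using g0 apply blast
    using g0 lcsc_cancel[OF assms(1,2)] by metis
  then show ?thesis using c g g0 by simp
qed

lemma step_intro:
  assumes "LCSC L" "a \<in> mor L" "y \<in> mor L" "rng L y = src L b" "g \<in> mor L" "rng L g = src L a" "comp L a g = comp L b y"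
  shows "zmap L [(a,b)] y = Some g"
proof -
  have "(THE g. g \<in> mor L \<and> rng L g = src L a \<and> comp L a g = comp L b y) = g"
    apply (rule the_equality)
    using assms apply blast
    using assms lcsc_cancel[OF assms(1,2)] by metis
  then show ?thesis using assms by auto
qed

lemma step_inv:
  assumes "LCSC L" "okp L (a,b)" "zmap L [(a,b)] y = Some g"
  shows "zmap L [(b,a)] g = Some y"
proof -
  have ab: "a \<in> mor L" "b \<in> mor L" using assms(2) by (auto simp: okp_def)
  from step_some[OF assms(1) ab(1) assms(3)] show ?thesis
    by (intro step_intro[OF assms(1) ab(2)]) auto
qed

definition rz :: "('a \<times> 'a) list \<Rightarrow> ('a \<times> 'a) list" where
  "rz z = rev (map prod.swap z)"

lemma zmap_rz:
  assumes "LCSC L" "\<forall>p\<in>set z. okp L p" "zmap L z x = Some y"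
  shows "zmap L (rz z) y = Some x"
  using assms(2,3)
proof (induction z arbitrary: y)
  case Nil then show ?case by (simp add: rz_def)
next
  case (Cons p z)
  obtain a b where p: "p = (a,b)" by fastforce
  from Cons.prems obtain y' where y': "zmap L z x = Some y'" "zmap L [(a,b)] y' = Some y"
    by (subst (asm) zmap_Cons') (auto simp: p split: option.splits)
  have "zmap L [(b,a)] y = Some y'" using step_inv[OF assms(1) _ y'(2)] Cons.prems p by auto
  moreover have "rz (p # z) = rz z @ [(b,a)]" by (simp add: rz_def p)
  ultimately show ?case using Cons.IH[OF _ y'(1)] Cons.prems by (simp add: zmap_append)
qed

lemma zmap_rz_self:
  assumes "LCSC L" "\<forall>p\<in>set z. okp L p"
  shows "zmap L (rz z @ z) x = (if zmap L z x = None then None else Some x)"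
  using zmap_rz[OF assms] by (auto simp: zmap_append split: option.split)

lemma okp_swap: "okp L (prod.swap p) = okp L p"
  by (auto simp: okp_def)

lemma zigzag_rz_app:
  assumes "zigzag L z1" "zigzag L z2" "zsrc L z1 = zsrc L z2"
  shows "zigzag L (rz z2 @ z2 @ rz z1 @ z1)"
proof -
  have ok1: "\<forall>p\<in>set z1. okp L p" and ok2: "\<forall>p\<in>set z2. okp L p"
    and s1: "successively (\<lambda>p q. src L (fst q) = src L (snd p)) z1"
    and s2: "successively (\<lambda>p q. src L (fst q) = src L (snd p)) z2"
    and n1: "z1 \<noteq> []" and n2: "z2 \<noteq> []"
    using assms by (auto simp: zigzag_alt)
  have sr: "successively (\<lambda>p q. src L (fst q) = src L (snd p)) (rz z)"
    if "successively (\<lambda>p q. src L (fst q) = src L (snd p)) z" for z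
    using that unfolding rz_def by (simp add: successively_map) (erule successively_mono; simp)
  have okr: "\<forall>p\<in>set (rz z). okp L p" if "\<forall>p\<in>set z. okp L p" for z
    using that by (auto simp: rz_def okp_swap)
  have lr: "last (rz z) = prod.swap (hd z)" "hd (rz z) = prod.swap (last z)" if "z \<noteq> []" for z :: "('a\<times>'a) list"
    using that by (auto simp: rz_def last_rev hd_rev hd_map last_map)
  have nr: "rz z \<noteq> []" if "z \<noteq> []" for z :: "('a\<times>'a) list" using that by (simp add: rz_def)
  show ?thesis
    unfolding zigzag_alt
    using ok1 ok2 okr[OF ok1] okr[OF ok2] sr[OF s1] sr[OF s2] s1 s2 n1 n2 nr[OF n1] nr[OF n2]
      lr[OF n1] lr[OF n2] assms(3)
    by (auto simp: successively_append_iff zsrc_def)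
qed

lemma D0_sub: "E \<in> D0 L v \<Longrightarrow> E \<subseteq> vL L v"
  by (auto simp: D0_def Adom_def)

lemma D0_ne: "E \<in> D0 L v \<Longrightarrow> E \<noteq> {}"
  by (auto simp: D0_def)

lemma D0_Int:
  assumes "LCSC L" "E \<in> D0 L v" "F \<in> D0 L v" "E \<inter> F \<noteq> {}"
  shows "E \<inter> F \<in> D0 L v"
proof -
  obtain z1 where z1: "E = Adom L z1" "zigzag L z1" "zsrc L z1 = v" using assms(2) by (auto simp: D0_def)
  obtain z2 where z2: "F = Adom L z2" "zigzag L z2" "zsrc L z2 = v" using assms(3) by (auto simp: D0_def)
  define w where "w = rz z2 @ z2 @ rz z1 @ z1"
  have zw: "zigzag L w" unfolding w_def using zigzag_rz_app[OF z1(2) z2(2)] z1(3) z2(3) by simp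
  have "z1 \<noteq> []" using z1 by (simp add: zigzag_def)
  then have sw: "zsrc L w = v" using z1 by (simp add: w_def zsrc_def)
  have ok1: "\<forall>p\<in>set z1. okp L p" and ok2: "\<forall>p\<in>set z2. okp L p"
    using z1 z2 by (auto simp: zigzag_alt)
  have "zmap L w x = (case zmap L (rz z1 @ z1) x of None \<Rightarrow> None | Some y \<Rightarrow> zmap L (rz z2 @ z2) y)" for x
    unfolding w_def by (metis append.assoc zmap_append)
  then have "zmap L w x \<noteq> None \<longleftrightarrow> zmap L z1 x \<noteq> None \<and> zmap L z2 x \<noteq> None" for x
    using zmap_rz_self[OF assms(1) ok1] zmap_rz_self[OF assms(1) ok2] by simp
  then have "Adom L w = E \<inter> F" using z1 z2 sw by (auto simp: Adom_def)
  then show ?thesis using zw sw assms(4) unfolding D0_def by blast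
qed




definition maxfilt :: "'a cat \<Rightarrow> 'a \<Rightarrow> 'a set set \<Rightarrow> bool" where
  "maxfilt L v M \<longleftrightarrow> D0_filter L v M \<and> (\<forall>M'. D0_filter L v M' \<and> M \<subseteq> M' \<longrightarrow> M' = M)"

lemma filt_Int: "D0_filter L v C \<Longrightarrow> E \<in> C \<Longrightarrow> F \<in> C \<Longrightarrow> E \<inter> F \<in> C"
  by (simp add: D0_filter_def)
lemma filt_up: "D0_filter L v C \<Longrightarrow> E \<in> C \<Longrightarrow> F \<in> D0 L v \<Longrightarrow> E \<subseteq> F \<Longrightarrow> F \<in> C"
  by (simp add: D0_filter_def)
lemma filt_sub: "D0_filter L v C \<Longrightarrow> C \<subseteq> D0 L v"
  by (simp add: D0_filter_def)
lemma filt_ne: "D0_filter L v C \<Longrightarrow> C \<noteq> {}"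
  by (simp add: D0_filter_def)
lemma filtI: "C \<noteq> {} \<Longrightarrow> C \<subseteq> D0 L v \<Longrightarrow> (\<And>E F. E \<in> C \<Longrightarrow> F \<in> C \<Longrightarrow> E \<inter> F \<in> C)
  \<Longrightarrow> (\<And>E F. E \<in> C \<Longrightarrow> F \<in> D0 L v \<Longrightarrow> E \<subseteq> F \<Longrightarrow> F \<in> C) \<Longrightarrow> D0_filter L v C"
  unfolding D0_filter_def by auto

lemma exists_maxfilt:
  assumes "D0_filter L v C0"
  shows "\<exists>M. maxfilt L v M \<and> C0 \<subseteq> M"
proof -
  let ?A = "{C. D0_filter L v C \<and> C0 \<subseteq> C}"
  have "\<exists>M\<in>?A. \<forall>X\<in>?A. M \<subseteq> X \<longrightarrow> X = M"
  proof (rule subset_Zorn_nonempty)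
    have "C0 \<in> ?A" using assms by simp
    then show "?A \<noteq> {}" by (metis empty_iff)
  next
    fix \<C> assume ne: "\<C> \<noteq> {}" and ch: "subset.chain ?A \<C>"
    have sub: "\<And>X. X \<in> \<C> \<Longrightarrow> D0_filter L v X" "\<And>X. X \<in> \<C> \<Longrightarrow> C0 \<subseteq> X"
      and cmp: "\<forall>X\<in>\<C>. \<forall>Y\<in>\<C>. X \<subseteq> Y \<or> Y \<subseteq> X"
      using ch unfolding subset.chain_def by blast+
    obtain X0 where X0: "X0 \<in> \<C>" using ne by blast
    have "D0_filter L v (\<Union>\<C>)"
    proof (rule filtI)
      have "X0 \<noteq> {}" using sub(1)[OF X0] by (rule filt_ne)
      then show "\<Union>\<C> \<noteq> {}" using X0 by blast
      show "\<Union>\<C> \<subseteq> D0 L v"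
      proof
        fix E assume "E \<in> \<Union>\<C>"
        then obtain X where "X \<in> \<C>" "E \<in> X" by (rule UnionE)
        then show "E \<in> D0 L v" using filt_sub[OF sub(1)] by (meson subsetD)
      qed
    next
      fix E F assume "E \<in> \<Union>\<C>" "F \<in> \<Union>\<C>"
      then obtain X Y where XY: "X \<in> \<C>" "Y \<in> \<C>" "E \<in> X" "F \<in> Y" by blast
      then have "E \<in> X \<and> F \<in> X \<or> E \<in> Y \<and> F \<in> Y" using cmp by blast
      then show "E \<inter> F \<in> \<Union>\<C>"
      proof
        assume "E \<in> X \<and> F \<in> X"
        then have "E \<inter> F \<in> X" using filt_Int[OF sub(1)[OF XY(1)]] by blast
        then show ?thesis using XY(1) by blast
      next
        assume "E \<in> Y \<and> F \<in> Y"
        then have "E \<inter> F \<in> Y" using filt_Int[OF sub(1)[OF XY(2)]] by blast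
        then show ?thesis using XY(2) by blast
      qed
    next
      fix E F assume "E \<in> \<Union>\<C>" "F \<in> D0 L v" "E \<subseteq> F"
      then obtain X where X: "X \<in> \<C>" "E \<in> X" by blast
      then have "F \<in> X" using filt_up[OF sub(1)[OF X(1)] X(2) \<open>F \<in> D0 L v\<close> \<open>E \<subseteq> F\<close>] by simp
      then show "F \<in> \<Union>\<C>" using X by blast
    qed
    moreover have "C0 \<subseteq> \<Union>\<C>" using sub(2)[OF X0] X0 by blast
    ultimately show "\<Union>\<C> \<in> ?A" by simp
  qed
  then obtain M where M1: "M \<in> ?A" and M2: "\<forall>X\<in>?A. M \<subseteq> X \<longrightarrow> X = M"
    by (rule bexE)
  have M: "D0_filter L v M" "C0 \<subseteq> M" using M1 by auto
  have "M' = M" if "D0_filter L v M'" "M \<subseteq> M'" for M'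
  proof -
    have "M' \<in> ?A" using that M(2) by auto
    then show ?thesis using M2 that(2) by simp
  qed
  then have "maxfilt L v M" unfolding maxfilt_def using M by simp
  then show ?thesis using M by blast
qed

lemma maxfilt_disj:
  assumes "LCSC L" "maxfilt L v M" "F \<in> D0 L v" "F \<notin> M"
  shows "\<exists>E\<in>M. E \<inter> F = {}"
proof (rule ccontr)
  assume nc: "\<not> ?thesis"
  have fM: "D0_filter L v M" using assms(2) by (simp add: maxfilt_def)
  have Mne: "M \<noteq> {}" and MD: "M \<subseteq> D0 L v" and MI: "\<And>E F. E \<in> M \<Longrightarrow> F \<in> M \<Longrightarrow> E \<inter> F \<in> M"
    using fM unfolding D0_filter_def by auto
  define M' where "M' = {H\<in>D0 L v. \<exists>E\<in>M. E \<inter> F \<subseteq> H}"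
  have FM': "F \<in> M'"
  proof -
    obtain E where "E \<in> M" using Mne by blast
    then show ?thesis using assms(3) unfolding M'_def by blast
  qed
  have "D0_filter L v M'"
    unfolding D0_filter_def
  proof (intro conjI ballI impI)
    show "M' \<noteq> {}" using FM' by blast
    show "M' \<subseteq> D0 L v" by (auto simp: M'_def)
  next
    fix H1 H2 assume "H1 \<in> M'" "H2 \<in> M'"
    then obtain E1 E2 where e: "E1 \<in> M" "E2 \<in> M" "E1 \<inter> F \<subseteq> H1" "E2 \<inter> F \<subseteq> H2"
      "H1 \<in> D0 L v" "H2 \<in> D0 L v" by (auto simp: M'_def)
    have E12: "E1 \<inter> E2 \<in> M" using MI e by simp
    have "E1 \<inter> E2 \<inter> F \<noteq> {}" using nc E12 by blast
    moreover have "E1 \<inter> E2 \<inter> F \<subseteq> H1 \<inter> H2" using e by blast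
    ultimately have "H1 \<inter> H2 \<noteq> {}" by blast
    then have "H1 \<inter> H2 \<in> D0 L v" using D0_Int[OF assms(1) e(5,6)] by simp
    then show "H1 \<inter> H2 \<in> M'" unfolding M'_def using E12 \<open>E1 \<inter> E2 \<inter> F \<subseteq> H1 \<inter> H2\<close> by blast
  next
    fix H1 H2 assume "H1 \<in> M'" "H2 \<in> D0 L v" "H1 \<subseteq> H2"
    then show "H2 \<in> M'" by (auto simp: M'_def)
  qed
  moreover have "M \<subseteq> M'"
  proof
    fix E assume "E \<in> M"
    then show "E \<in> M'" unfolding M'_def using MD by blast
  qed
  ultimately have "M' = M" using assms(2) by (simp add: maxfilt_def)
  then show False using assms(4) FM' by simp
qed

lemma filter_finite_Int:
  assumes "D0_filter L v M" "E0 \<in> M" "finite F" "\<forall>f\<in>F. e f \<in> M"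
  shows "E0 \<inter> (\<Inter>f\<in>F. e f) \<in> M"
  using assms(3,4)
proof (induction F rule: finite_induct)
  case empty then show ?case using assms(2) by simp
next
  case (insert x F)
  have "E0 \<inter> (\<Inter>f\<in>insert x F. e f) = (E0 \<inter> (\<Inter>f\<in>F. e f)) \<inter> e x" by auto
  then show ?case using insert assms(1) unfolding D0_filter_def by auto
qed

lemma maxfilt_Lstar:
  assumes "LCSC L" "maxfilt L v M"
  shows "M \<in> Lstar L v"
proof -
  have fM: "D0_filter L v M" using assms(2) by (simp add: maxfilt_def)
  have "\<not> covers \<F> M" if F: "finite \<F>" "\<F> \<subseteq> D0 L v" "\<F> \<inter> M = {}" for \<F>
  proof
    assume "covers \<F> M"
    then obtain E0 where E0: "E0 \<in> M" "E0 \<subseteq> \<Union>\<F>" by (auto simp: covers_def)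
    have "\<forall>f\<in>\<F>. \<exists>E. E \<in> M \<and> E \<inter> f = {}"
    proof
      fix f assume f: "f \<in> \<F>"
      then have "f \<in> D0 L v" "f \<notin> M" using F by auto
      then show "\<exists>E. E \<in> M \<and> E \<inter> f = {}" using maxfilt_disj[OF assms] by auto
    qed
    from bchoice[OF this] obtain e where e: "\<forall>f\<in>\<F>. e f \<in> M \<and> e f \<inter> f = {}" by blast
    have GM: "E0 \<inter> (\<Inter>f\<in>\<F>. e f) \<in> M" using filter_finite_Int[OF fM E0(1) F(1)] e by simp
    have "M \<subseteq> D0 L v" using fM unfolding D0_filter_def by simp
    then have "E0 \<inter> (\<Inter>f\<in>\<F>. e f) \<in> D0 L v" using GM by (rule subsetD)
    then have "E0 \<inter> (\<Inter>f\<in>\<F>. e f) \<noteq> {}" by (rule D0_ne)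
    moreover have "E0 \<inter> (\<Inter>f\<in>\<F>. e f) = {}"
    proof (rule equals0I)
      fix x assume x: "x \<in> E0 \<inter> (\<Inter>f\<in>\<F>. e f)"
      then obtain f where f: "f \<in> \<F>" "x \<in> f" using E0(2) by blast
      then have "x \<in> e f" using x by blast
      then show False using e f by blast
    qed
    ultimately show False by simp
  qed
  then show ?thesis using fM by (simp add: Lstar_def)
qed

lemma maxfilt_Lstarstar:
  assumes "LCSC L" "maxfilt L v M"
  shows "M \<in> Lstarstar L v"
proof -
  have "C' = M" if "C' \<in> Lstar L v" "M \<subseteq> C'" for C'
  proof -
    have "D0_filter L v C'" using that(1) by (simp add: Lstar_def)
    then show ?thesis using assms(2) that(2) unfolding maxfilt_def by simp
  qed
  then show ?thesis using maxfilt_Lstar[OF assms] unfolding Lstarstar_def by simp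
qed

lemma Lstarstar_maxfilt:
  assumes "LCSC L" "C \<in> Lstarstar L v"
  shows "maxfilt L v C"
proof -
  have CL: "C \<in> Lstar L v" and mx: "\<forall>C'\<in>Lstar L v. C \<subseteq> C' \<longrightarrow> C' = C"
    using assms(2) by (auto simp: Lstarstar_def)
  have "D0_filter L v C" using CL by (simp add: Lstar_def)
  from exists_maxfilt[OF this] obtain M where M: "maxfilt L v M" "C \<subseteq> M" by (elim exE conjE)
  have "M = C" using mx maxfilt_Lstar[OF assms(1) M(1)] M(2) by simp
  then show ?thesis using M by simp
qed

lemma D0_in_Lstarstar:
  assumes "LCSC L" "G \<in> D0 L v"
  shows "\<exists>C\<in>Lstarstar L v. G \<in> C"
proof -
  define P where "P = {F\<in>D0 L v. G \<subseteq> F}"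
  have "D0_filter L v P"
    unfolding D0_filter_def
  proof (intro conjI ballI impI)
    show "P \<noteq> {}" using assms by (auto simp: P_def)
    show "P \<subseteq> D0 L v" by (auto simp: P_def)
  next
    fix E F assume "E \<in> P" "F \<in> P"
    then have "E \<in> D0 L v" "F \<in> D0 L v" "G \<subseteq> E \<inter> F" by (auto simp: P_def)
    moreover then have "E \<inter> F \<noteq> {}" using D0_ne[OF assms(2)] by blast
    ultimately show "E \<inter> F \<in> P" using D0_Int[OF assms(1)] by (simp add: P_def)
  next
    fix E F assume "E \<in> P" "F \<in> D0 L v" "E \<subseteq> F"
    then show "F \<in> P" by (auto simp: P_def)
  qed
  from exists_maxfilt[OF this] obtain M where M: "maxfilt L v M" "P \<subseteq> M" by (elim exE conjE)
  have "G \<in> P" using assms by (simp add: P_def)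
  then have "G \<in> M" using M(2) by (rule subsetD[rotated])
  then show ?thesis using maxfilt_Lstarstar[OF assms(1) M(1)] by (rule rev_bexI[rotated])
qed




lemma Aring_ring: "D0 L v \<subseteq> Pow (vL L v) \<Longrightarrow> ring_of_sets (vL L v) (Aring L v)"
proof -
  assume DP: "D0 L v \<subseteq> Pow (vL L v)"
  define F where "F = {M. ring_of_sets (vL L v) M \<and> D0 L v \<subseteq> M}"
  have A: "Aring L v = \<Inter>F" by (simp add: Aring_def F_def)
  have ne: "Pow (vL L v) \<in> F" using DP by (auto simp: ring_of_sets_iff F_def)
  have r: "\<And>M. M \<in> F \<Longrightarrow> M \<subseteq> Pow (vL L v) \<and> {} \<in> M \<and> (\<forall>a\<in>M. \<forall>b\<in>M. a \<union> b \<in> M) \<and> (\<forall>a\<in>M. \<forall>b\<in>M. a - b \<in> M)"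
    by (simp add: ring_of_sets_iff F_def)
  have 1: "\<Inter>F \<subseteq> Pow (vL L v)" using ne by (rule Inf_lower)
  have 2: "{} \<in> \<Inter>F" using r by (simp add: Inter_iff)
  have 3: "\<forall>a\<in>\<Inter>F. \<forall>b\<in>\<Inter>F. a \<union> b \<in> \<Inter>F" using r by (simp add: Inter_iff)
  have 4: "\<forall>a\<in>\<Inter>F. \<forall>b\<in>\<Inter>F. a - b \<in> \<Inter>F" using r by (simp add: Inter_iff)
  show ?thesis unfolding ring_of_sets_iff A using 1 2 3 4 by simp
qed

lemma D0_Pow: "D0 L v \<subseteq> Pow (vL L v)"
  using D0_sub[of _ L v] by auto

lemma Aring_ring': "ring_of_sets (vL L v) (Aring L v)"
  using Aring_ring[OF D0_Pow[of L v]] .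

lemma D0_Aring: "D0 L v \<subseteq> Aring L v"
  unfolding Aring_def by auto

lemma Aring_induct:
  assumes "ring_of_sets (vL L v) M" "D0 L v \<subseteq> M"
  shows "Aring L v \<subseteq> M"
  unfolding Aring_def using assms by (intro Inf_lower) simp

lemma Aring_Un: "A \<in> Aring L v \<Longrightarrow> B \<in> Aring L v \<Longrightarrow> A \<union> B \<in> Aring L v"
  using Aring_ring'[of L v] by (simp add: ring_of_sets_iff)
lemma Aring_Diff: "A \<in> Aring L v \<Longrightarrow> B \<in> Aring L v \<Longrightarrow> A - B \<in> Aring L v"
  using Aring_ring'[of L v] by (simp add: ring_of_sets_iff)
lemma Aring_Int: "A \<in> Aring L v \<Longrightarrow> B \<in> Aring L v \<Longrightarrow> A \<inter> B \<in> Aring L v"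
proof -
  assume "A \<in> Aring L v" "B \<in> Aring L v"
  then have "A - (A - B) \<in> Aring L v" using Aring_Diff[of A L v "A - B"] Aring_Diff[of A L v B] by simp
  moreover have "A - (A - B) = A \<inter> B" by auto
  ultimately show ?thesis by simp
qed
lemma Aring_Union: "finite F \<Longrightarrow> F \<subseteq> Aring L v \<Longrightarrow> \<Union>F \<in> Aring L v"
  using ring_of_sets.finite_Union[OF Aring_ring'[of L v]] by simp

definition Nb :: "'a cat \<Rightarrow> 'a \<Rightarrow> 'a set set \<Rightarrow> 'a set set" where
  "Nb L v C = {E - \<Union>F | E F. E \<in> C \<and> finite F \<and> F \<subseteq> D0 L v \<and> \<not> covers F C}"

definition Uexp :: "'a cat \<Rightarrow> 'a \<Rightarrow> 'a set set \<Rightarrow> 'a set set" where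
  "Uexp L v C = {A \<in> Aring L v. \<exists>N\<in>Nb L v C. N \<subseteq> A}"

lemma noncov_disj: "\<not> covers F C \<Longrightarrow> F \<inter> C = {}"
  unfolding covers_def by auto

lemma Nb_ne: "N \<in> Nb L v C \<Longrightarrow> N \<noteq> {}"
  unfolding Nb_def covers_def by auto

lemma Nb_Aring: "C \<subseteq> D0 L v \<Longrightarrow> N \<in> Nb L v C \<Longrightarrow> N \<in> Aring L v"
proof -
  assume C: "C \<subseteq> D0 L v" and "N \<in> Nb L v C"
  then obtain E F where N: "N = E - \<Union>F" "E \<in> C" "finite F" "F \<subseteq> D0 L v"
    unfolding Nb_def by auto
  have "E \<in> Aring L v" using N(2) C D0_Aring[of L v] by auto
  moreover have "\<Union>F \<in> Aring L v" using N(3,4) D0_Aring[of L v] by (intro Aring_Union) auto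
  ultimately show ?thesis using N(1) Aring_Diff by simp
qed

lemma Lstar_D: "C \<in> Lstar L v \<Longrightarrow> D0_filter L v C"
  by (simp add: Lstar_def)

lemma Lstar_noncov: "C \<in> Lstar L v \<Longrightarrow> finite F \<Longrightarrow> F \<subseteq> D0 L v \<Longrightarrow> F \<inter> C = {} \<Longrightarrow> \<not> covers F C"
  by (simp add: Lstar_def)

lemma Nb_Int:
  assumes "C \<in> Lstar L v" "N1 \<in> Nb L v C" "N2 \<in> Nb L v C"
  shows "N1 \<inter> N2 \<in> Nb L v C"
proof -
  obtain E1 F1 where 1: "N1 = E1 - \<Union>F1" "E1 \<in> C" "finite F1" "F1 \<subseteq> D0 L v" "\<not> covers F1 C"
    using assms(2) unfolding Nb_def by auto
  obtain E2 F2 where 2: "N2 = E2 - \<Union>F2" "E2 \<in> C" "finite F2" "F2 \<subseteq> D0 L v" "\<not> covers F2 C"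
    using assms(3) unfolding Nb_def by auto
  have "E1 \<inter> E2 \<in> C" using filt_Int[OF Lstar_D[OF assms(1)] 1(2) 2(2)] .
  moreover have "(F1 \<union> F2) \<inter> C = {}" using noncov_disj[OF 1(5)] noncov_disj[OF 2(5)] by auto
  then have "\<not> covers (F1 \<union> F2) C" using Lstar_noncov[OF assms(1), of "F1 \<union> F2"] 1(3,4) 2(3,4) by simp
  moreover have "N1 \<inter> N2 = (E1 \<inter> E2) - \<Union>(F1 \<union> F2)" using 1(1) 2(1) by auto
  ultimately show ?thesis unfolding Nb_def using 1(3,4) 2(3,4) by auto
qed

lemma Nb_of_C: "C \<in> Lstar L v \<Longrightarrow> E \<in> C \<Longrightarrow> E \<in> Nb L v C"
proof -
  assume C: "C \<in> Lstar L v" and E: "E \<in> C"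
  have "\<not> covers {} C" using Lstar_noncov[OF C, of "{}"] by simp
  then have "E - \<Union>{} \<in> Nb L v C" unfolding Nb_def using E by blast
  then show ?thesis by simp
qed

lemma decided:
  assumes C: "C \<in> Lstar L v" and A: "A \<in> Aring L v"
  shows "(\<exists>N\<in>Nb L v C. N \<subseteq> A) \<or> (\<exists>N\<in>Nb L v C. N \<inter> A = {})"
proof -
  let ?Q = "\<lambda>A. (\<exists>N\<in>Nb L v C. N \<subseteq> A) \<or> (\<exists>N\<in>Nb L v C. N \<inter> A = {})"
  let ?M = "{A \<in> Pow (vL L v). ?Q A}"
  have fC: "D0_filter L v C" using Lstar_D[OF C] .
  obtain E0 where E0: "E0 \<in> C" using filt_ne[OF fC] by auto
  have N0: "E0 \<in> Nb L v C" using Nb_of_C[OF C E0] .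
  have "ring_of_sets (vL L v) ?M"
    unfolding ring_of_sets_iff
  proof (intro conjI ballI)
    show "?M \<subseteq> Pow (vL L v)" by auto
    show "{} \<in> ?M" using N0 by auto
  next
    fix a b assume a: "a \<in> ?M" and b: "b \<in> ?M"
    have "?Q (a \<union> b)"
    proof (cases "\<exists>N\<in>Nb L v C. N \<subseteq> a")
      case True then show ?thesis by auto
    next
      case False
      then obtain Na where Na: "Na \<in> Nb L v C" "Na \<inter> a = {}" using a by auto
      show ?thesis
      proof (cases "\<exists>N\<in>Nb L v C. N \<subseteq> b")
        case True then show ?thesis by auto
      next
        case False
        then obtain Nb' where Nb': "Nb' \<in> Nb L v C" "Nb' \<inter> b = {}" using b by auto
        have "Na \<inter> Nb' \<in> Nb L v C" using Nb_Int[OF C Na(1) Nb'(1)] .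
        moreover have "(Na \<inter> Nb') \<inter> (a \<union> b) = {}" using Na(2) Nb'(2) by auto
        ultimately show ?thesis by auto
      qed
    qed
    then show "a \<union> b \<in> ?M" using a b by auto
  next
    fix a b assume a: "a \<in> ?M" and b: "b \<in> ?M"
    have "?Q (a - b)"
    proof (cases "\<exists>N\<in>Nb L v C. N \<inter> a = {}")
      case True
      then obtain N where "N \<in> Nb L v C" "N \<inter> a = {}" by auto
      then have "N \<in> Nb L v C \<and> N \<inter> (a - b) = {}" by auto
      then show ?thesis by auto
    next
      case False
      then obtain Na where Na: "Na \<in> Nb L v C" "Na \<subseteq> a" using a by auto
      show ?thesis
      proof (cases "\<exists>N\<in>Nb L v C. N \<subseteq> b")
        case True
        then obtain N where "N \<in> Nb L v C" "N \<subseteq> b" by auto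
        then have "N \<in> Nb L v C \<and> N \<inter> (a - b) = {}" by auto
        then show ?thesis by auto
      next
        case False
        then obtain Nb' where Nb': "Nb' \<in> Nb L v C" "Nb' \<inter> b = {}" using b by auto
        have "Na \<inter> Nb' \<in> Nb L v C" using Nb_Int[OF C Na(1) Nb'(1)] .
        moreover have "Na \<inter> Nb' \<subseteq> a - b" using Na(2) Nb'(2) by auto
        ultimately show ?thesis by auto
      qed
    qed
    then show "a - b \<in> ?M" using a b by auto
  qed
  moreover have "D0 L v \<subseteq> ?M"
  proof
    fix A assume A: "A \<in> D0 L v"
    have "?Q A"
    proof (cases "A \<in> C")
      case True
      then have "A \<in> Nb L v C" using Nb_of_C[OF C] by simp
      then show ?thesis by auto
    next
      case False
      then have "{A} \<inter> C = {}" by auto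
      then have nc: "\<not> covers {A} C" using Lstar_noncov[OF C, of "{A}"] A by simp
      have "E0 - \<Union>{A} \<in> Nb L v C" unfolding Nb_def using E0 A nc by blast
      moreover have "(E0 - \<Union>{A}) \<inter> A = {}" by auto
      ultimately show ?thesis by blast
    qed
    then show "A \<in> ?M" using A D0_Pow[of L v] by auto
  qed
  ultimately have "Aring L v \<subseteq> ?M" by (rule Aring_induct)
  then show ?thesis using A by auto
qed




lemma rf_sub: "ring_filter M U \<Longrightarrow> U \<subseteq> M" by (simp add: ring_filter_def)
lemma rf_ne: "ring_filter M U \<Longrightarrow> U \<noteq> {}" by (simp add: ring_filter_def)
lemma rf_empty: "ring_filter M U \<Longrightarrow> {} \<notin> U" by (simp add: ring_filter_def)
lemma rf_Int: "ring_filter M U \<Longrightarrow> A \<in> U \<Longrightarrow> B \<in> U \<Longrightarrow> A \<inter> B \<in> U" by (simp add: ring_filter_def)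
lemma rf_up: "ring_filter M U \<Longrightarrow> A \<in> U \<Longrightarrow> B \<in> M \<Longrightarrow> A \<subseteq> B \<Longrightarrow> B \<in> U" by (simp add: ring_filter_def)
lemma rfI: "U \<subseteq> M \<Longrightarrow> U \<noteq> {} \<Longrightarrow> {} \<notin> U \<Longrightarrow> (\<And>A B. A \<in> U \<Longrightarrow> B \<in> U \<Longrightarrow> A \<inter> B \<in> U)
  \<Longrightarrow> (\<And>A B. A \<in> U \<Longrightarrow> B \<in> M \<Longrightarrow> A \<subseteq> B \<Longrightarrow> B \<in> U) \<Longrightarrow> ring_filter M U"
  by (simp add: ring_filter_def)

lemma Uexp_filter:
  assumes C: "C \<in> Lstar L v"
  shows "ring_filter (Aring L v) (Uexp L v C)"
proof (rule rfI)
  have fC: "D0_filter L v C" using Lstar_D[OF C] .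
  have CD: "C \<subseteq> D0 L v" using filt_sub[OF fC] .
  obtain E0 where E0: "E0 \<in> C" using filt_ne[OF fC] by auto
  have "E0 \<in> Aring L v" using E0 CD D0_Aring[of L v] by auto
  moreover have "E0 \<in> Nb L v C" using Nb_of_C[OF C E0] .
  ultimately have "E0 \<in> Uexp L v C" unfolding Uexp_def by auto
  then show "Uexp L v C \<noteq> {}" by auto
  show "Uexp L v C \<subseteq> Aring L v" unfolding Uexp_def by auto
  show "{} \<notin> Uexp L v C" unfolding Uexp_def using Nb_ne[of _ L v C] by auto
next
  fix A B assume "A \<in> Uexp L v C" "B \<in> Uexp L v C"
  then obtain N1 N2 where N: "N1 \<in> Nb L v C" "N1 \<subseteq> A" "N2 \<in> Nb L v C" "N2 \<subseteq> B" "A \<in> Aring L v" "B \<in> Aring L v"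
    unfolding Uexp_def by auto
  have "N1 \<inter> N2 \<in> Nb L v C" using Nb_Int[OF C N(1) N(3)] .
  moreover have "A \<inter> B \<in> Aring L v" using Aring_Int[OF N(5,6)] .
  moreover have "N1 \<inter> N2 \<subseteq> A \<inter> B" using N(2,4) by auto
  ultimately show "A \<inter> B \<in> Uexp L v C" unfolding Uexp_def by auto
next
  fix A B assume "A \<in> Uexp L v C" "B \<in> Aring L v" "A \<subseteq> B"
  then show "B \<in> Uexp L v C" unfolding Uexp_def by auto
qed

lemma Uexp_trace:
  assumes C: "C \<in> Lstar L v"
  shows "Uexp L v C \<inter> D0 L v = C"
proof (intro equalityI subsetI)
  fix A assume A: "A \<in> Uexp L v C \<inter> D0 L v"
  then obtain N1 where N1: "N1 \<in> Nb L v C" "N1 \<subseteq> A" unfolding Uexp_def by auto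
  show "A \<in> C"
  proof (rule ccontr)
    assume nA: "A \<notin> C"
    have fC: "D0_filter L v C" using Lstar_D[OF C] .
    obtain E0 where E0: "E0 \<in> C" using filt_ne[OF fC] by auto
    have "{A} \<inter> C = {}" using nA by auto
    then have nc: "\<not> covers {A} C" using Lstar_noncov[OF C, of "{A}"] A by simp
    have "{A} \<subseteq> D0 L v" using A by simp
    then have N2: "E0 - \<Union>{A} \<in> Nb L v C" unfolding Nb_def using E0 nc by blast
    have "N1 \<inter> (E0 - \<Union>{A}) \<in> Nb L v C" using Nb_Int[OF C N1(1) N2] .
    moreover have "N1 \<inter> (E0 - \<Union>{A}) = {}" using N1(2) by auto
    ultimately show False using Nb_ne[of "{}" L v C] by simp
  qed
next
  fix A assume A: "A \<in> C"
  have fC: "D0_filter L v C" using Lstar_D[OF C] .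
  have AD: "A \<in> D0 L v" using A filt_sub[OF fC] by auto
  then have "A \<in> Aring L v" using D0_Aring[of L v] by auto
  moreover have "A \<in> Nb L v C" using Nb_of_C[OF C A] .
  ultimately show "A \<in> Uexp L v C \<inter> D0 L v" using AD unfolding Uexp_def by auto
qed

lemma Uexp_ultra:
  assumes C: "C \<in> Lstar L v"
  shows "ring_ultrafilter (Aring L v) (Uexp L v C)"
proof -
  have f: "ring_filter (Aring L v) (Uexp L v C)" using Uexp_filter[OF C] .
  have "U' = Uexp L v C" if U': "ring_filter (Aring L v) U'" "Uexp L v C \<subseteq> U'" for U'
  proof (intro equalityI subsetI)
    fix A assume A: "A \<in> U'"
    have AR: "A \<in> Aring L v" using rf_sub[OF U'(1)] A by auto
    show "A \<in> Uexp L v C"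
    proof (cases "\<exists>N\<in>Nb L v C. N \<subseteq> A")
      case True then show ?thesis using AR unfolding Uexp_def by auto
    next
      case False
      then obtain N where N: "N \<in> Nb L v C" "N \<inter> A = {}" using decided[OF C AR] by auto
      have "N \<in> Aring L v" using Nb_Aring[OF filt_sub[OF Lstar_D[OF C]] N(1)] .
      then have "N \<in> Uexp L v C" using N(1) unfolding Uexp_def by auto
      then have "N \<in> U'" using U'(2) by auto
      then have "N \<inter> A \<in> U'" using rf_Int[OF U'(1) _ A] by simp
      then show ?thesis using N(2) rf_empty[OF U'(1)] by simp
    qed
  next
    fix A assume "A \<in> Uexp L v C" then show "A \<in> U'" using U'(2) by auto
  qed
  then show ?thesis using f unfolding ring_ultrafilter_def by auto
qed

lemma ultra_disj:
  assumes U: "ring_ultrafilter (Aring L v) U" and X: "X \<in> Aring L v" "X \<notin> U"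
  shows "\<exists>W\<in>U. W \<inter> X = {}"
proof (rule ccontr)
  assume nc: "\<not> ?thesis"
  have f: "ring_filter (Aring L v) U" and mx: "\<And>U'. ring_filter (Aring L v) U' \<Longrightarrow> U \<subseteq> U' \<Longrightarrow> U' = U"
    using U unfolding ring_ultrafilter_def by auto
  define U' where "U' = {Z \<in> Aring L v. \<exists>W\<in>U. W \<inter> X \<subseteq> Z}"
  have XU': "X \<in> U'"
  proof -
    obtain W where "W \<in> U" using rf_ne[OF f] by auto
    then show ?thesis using X(1) unfolding U'_def by auto
  qed
  have "ring_filter (Aring L v) U'"
  proof (rule rfI)
    show "U' \<subseteq> Aring L v" unfolding U'_def by auto
    show "U' \<noteq> {}" using XU' by auto
    show "{} \<notin> U'" unfolding U'_def using nc by auto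
  next
    fix A B assume "A \<in> U'" "B \<in> U'"
    then obtain W1 W2 where W: "W1 \<in> U" "W2 \<in> U" "W1 \<inter> X \<subseteq> A" "W2 \<inter> X \<subseteq> B" "A \<in> Aring L v" "B \<in> Aring L v"
      unfolding U'_def by auto
    have "W1 \<inter> W2 \<in> U" using rf_Int[OF f W(1,2)] .
    moreover have "(W1 \<inter> W2) \<inter> X \<subseteq> A \<inter> B" using W(3,4) by auto
    moreover have "A \<inter> B \<in> Aring L v" using Aring_Int[OF W(5,6)] .
    ultimately show "A \<inter> B \<in> U'" unfolding U'_def by auto
  next
    fix A B assume "A \<in> U'" "B \<in> Aring L v" "A \<subseteq> B"
    then show "B \<in> U'" unfolding U'_def by auto
  qed
  moreover have "U \<subseteq> U'"
  proof
    fix W assume "W \<in> U"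
    moreover then have "W \<in> Aring L v" using rf_sub[OF f] by auto
    ultimately show "W \<in> U'" unfolding U'_def by auto
  qed
  ultimately have "U' = U" by (rule mx)
  then show False using XU' X(2) by simp
qed

lemma ultra_prime:
  assumes U: "ring_ultrafilter (Aring L v) U" and X: "X \<in> Aring L v" and Y: "Y \<in> Aring L v"
    and XY: "X \<union> Y \<in> U"
  shows "X \<in> U \<or> Y \<in> U"
proof (rule ccontr)
  assume "\<not> ?thesis"
  then have "X \<notin> U" "Y \<notin> U" by auto
  then obtain W1 W2 where W: "W1 \<in> U" "W1 \<inter> X = {}" "W2 \<in> U" "W2 \<inter> Y = {}"
    using ultra_disj[OF U X] ultra_disj[OF U Y] by auto
  have f: "ring_filter (Aring L v) U" using U unfolding ring_ultrafilter_def by auto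
  have "W1 \<inter> W2 \<in> U" using rf_Int[OF f W(1,3)] .
  then have "(W1 \<inter> W2) \<inter> (X \<union> Y) \<in> U" using rf_Int[OF f _ XY] by simp
  moreover have "(W1 \<inter> W2) \<inter> (X \<union> Y) = {}" using W(2,4) by auto
  ultimately show False using rf_empty[OF f] by simp
qed

lemma ultra_diff:
  assumes U: "ring_ultrafilter (Aring L v) U" and X: "X \<in> U" and f: "f \<in> Aring L v" "f \<notin> U"
  shows "X - f \<in> U"
proof -
  have rf: "ring_filter (Aring L v) U" using U unfolding ring_ultrafilter_def by auto
  have XR: "X \<in> Aring L v" using rf_sub[OF rf] X by auto
  have "X \<inter> f \<notin> U"
  proof
    assume "X \<inter> f \<in> U"
    then have "f \<in> U" using rf_up[OF rf _ f(1)] by auto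
    then show False using f(2) by simp
  qed
  moreover have "(X - f) \<union> (X \<inter> f) \<in> U" using X by (simp add: Un_Diff_Int)
  ultimately show ?thesis using ultra_prime[OF U Aring_Diff[OF XR f(1)] Aring_Int[OF XR f(1)]] by auto
qed

lemma Uexp_unique:
  assumes C: "C \<in> Lstar L v" and U: "ring_ultrafilter (Aring L v) U" and tr: "U \<inter> D0 L v = C"
  shows "U = Uexp L v C"
proof -
  have rf: "ring_filter (Aring L v) U" using U unfolding ring_ultrafilter_def by auto
  have "Uexp L v C \<subseteq> U"
  proof
    fix A assume "A \<in> Uexp L v C"
    then obtain N where A: "A \<in> Aring L v" "N \<in> Nb L v C" "N \<subseteq> A" unfolding Uexp_def by auto
    then obtain E F where N: "N = E - \<Union>F" "E \<in> C" "finite F" "F \<subseteq> D0 L v" "\<not> covers F C"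
      unfolding Nb_def by auto
    have FU: "\<forall>f\<in>F. f \<in> Aring L v \<and> f \<notin> U"
    proof
      fix f assume "f \<in> F"
      then have "f \<in> D0 L v" "f \<notin> C" using N(4) noncov_disj[OF N(5)] by auto
      then show "f \<in> Aring L v \<and> f \<notin> U" using tr D0_Aring[of L v] by auto
    qed
    have EU: "E \<in> U" using N(2) tr by auto
    have "E - \<Union>G \<in> U" if "finite G" "G \<subseteq> F" for G
      using that
    proof (induction G rule: finite_induct)
      case empty then show ?case using EU by simp
    next
      case (insert g G)
      then have "E - \<Union>G \<in> U" by simp
      moreover have "g \<in> Aring L v" "g \<notin> U" using FU insert.prems by auto
      ultimately have "(E - \<Union>G) - g \<in> U" using ultra_diff[OF U] by simp
      moreover have "(E - \<Union>G) - g = E - \<Union>(insert g G)" by auto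
      ultimately show ?case by simp
    qed
    then have "N \<in> U" using N(1,3) by simp
    then show "A \<in> U" using rf_up[OF rf _ A(1) A(3)] by simp
  qed
  moreover have "\<forall>U'. ring_filter (Aring L v) U' \<and> Uexp L v C \<subseteq> U' \<longrightarrow> U' = Uexp L v C"
    using Uexp_ultra[OF C] unfolding ring_ultrafilter_def by simp
  ultimately show ?thesis using rf by simp
qed

lemma UC_eq:
  assumes C: "C \<in> Lstar L v"
  shows "UC L v C = Uexp L v C" "UC L v C \<in> Xv L v"
proof -
  have "(THE U. U \<in> Xv L v \<and> U \<inter> D0 L v = C) = Uexp L v C"
  proof (rule the_equality)
    show "Uexp L v C \<in> Xv L v \<and> Uexp L v C \<inter> D0 L v = C"
      using Uexp_ultra[OF C] Uexp_trace[OF C] unfolding Xv_def by simp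
  next
    fix U assume "U \<in> Xv L v \<and> U \<inter> D0 L v = C"
    then show "U = Uexp L v C" using Uexp_unique[OF C] unfolding Xv_def by simp
  qed
  then show "UC L v C = Uexp L v C" by (simp add: UC_def)
  then show "UC L v C \<in> Xv L v" using Uexp_ultra[OF C] unfolding Xv_def by simp
qed




definition hat :: "'a cat \<Rightarrow> 'a \<Rightarrow> 'a set \<Rightarrow> 'a set set set" where
  "hat L v A = {U \<in> Xv L v. A \<in> U}"

lemma Xtop_eq: "Xtop L v = topology_generated_by {hat L v A | A. A \<in> Aring L v}"
  unfolding Xtop_def hat_def by simp

lemma Xv_rf: "U \<in> Xv L v \<Longrightarrow> ring_filter (Aring L v) U"
  unfolding Xv_def ring_ultrafilter_def by simp

lemma open_basic:
  assumes "generate_topology_on {hat L v A | A. A \<in> Aring L v} T"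
  shows "\<forall>x\<in>T. \<exists>A\<in>Aring L v. x \<in> hat L v A \<and> hat L v A \<subseteq> T"
  using assms
proof (induction rule: generate_topology_on.induct)
  case Empty then show ?case by simp
next
  case (Int a b)
  show ?case
  proof
    fix x assume x: "x \<in> a \<inter> b"
    obtain A1 where A1: "A1 \<in> Aring L v" "x \<in> hat L v A1" "hat L v A1 \<subseteq> a" using Int.IH(1) x by auto
    obtain A2 where A2: "A2 \<in> Aring L v" "x \<in> hat L v A2" "hat L v A2 \<subseteq> b" using Int.IH(2) x by auto
    have xX: "x \<in> Xv L v" "A1 \<in> x" "A2 \<in> x" using A1(2) A2(2) by (auto simp: hat_def)
    have "A1 \<inter> A2 \<in> x" using rf_Int[OF Xv_rf[OF xX(1)] xX(2,3)] .
    then have "x \<in> hat L v (A1 \<inter> A2)" using xX(1) by (simp add: hat_def)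
    moreover have "hat L v (A1 \<inter> A2) \<subseteq> hat L v A1"
    proof
      fix U assume "U \<in> hat L v (A1 \<inter> A2)"
      then have "U \<in> Xv L v" "A1 \<inter> A2 \<in> U" by (auto simp: hat_def)
      then have "A1 \<in> U" using rf_up[OF Xv_rf[of U L v] _ A1(1)] by auto
      then show "U \<in> hat L v A1" using \<open>U \<in> Xv L v\<close> by (simp add: hat_def)
    qed
    moreover have "hat L v (A1 \<inter> A2) \<subseteq> hat L v A2"
    proof
      fix U assume "U \<in> hat L v (A1 \<inter> A2)"
      then have "U \<in> Xv L v" "A1 \<inter> A2 \<in> U" by (auto simp: hat_def)
      then have "A2 \<in> U" using rf_up[OF Xv_rf[of U L v] _ A2(1)] by auto
      then show "U \<in> hat L v A2" using \<open>U \<in> Xv L v\<close> by (simp add: hat_def)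
    qed
    moreover have "A1 \<inter> A2 \<in> Aring L v" using Aring_Int[OF A1(1) A2(1)] .
    ultimately show "\<exists>A\<in>Aring L v. x \<in> hat L v A \<and> hat L v A \<subseteq> a \<inter> b"
      using A1(3) A2(3) by blast
  qed
next
  case (UN K)
  show ?case
  proof
    fix x assume "x \<in> \<Union>K"
    then obtain k where k: "k \<in> K" "x \<in> k" by auto
    then obtain A where "A \<in> Aring L v" "x \<in> hat L v A" "hat L v A \<subseteq> k" using UN.IH by blast
    then show "\<exists>A\<in>Aring L v. x \<in> hat L v A \<and> hat L v A \<subseteq> \<Union>K" using k(1) by blast
  qed
next
  case (Basis s)
  then obtain A where "A \<in> Aring L v" "s = hat L v A" by auto
  then show ?case by auto
qed

theorem mainTheorem12:
  fixes L :: "'a cat" and v :: 'a and C :: "'a set set"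
  assumes "LCSC L" and "v \<in> obj L" and "C \<in> Lstar L v"
  shows "UC L v C \<in> boundary L v \<longleftrightarrow>
    (\<forall>\<F>. finite \<F> \<and> \<F> \<subseteq> D0 L v \<and> \<not> covers \<F> C \<longrightarrow>
       (\<forall>E\<in>C. \<exists>G\<in>D0 L v. G \<subseteq> E - \<Union>\<F>))"
proof -
  have LC: "LCSC L" and CL: "C \<in> Lstar L v" using assms by auto
  have U0: "UC L v C = Uexp L v C" "UC L v C \<in> Xv L v" using UC_eq[OF CL] by auto
  have CD: "C \<subseteq> D0 L v" using filt_sub[OF Lstar_D[OF CL]] .
  let ?B = "{hat L v A | A. A \<in> Aring L v}"
  have bd: "boundary L v = topology_generated_by ?B closure_of (UC L v ` Lstarstar L v)"
    unfolding boundary_def Xtop_eq ..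
  show ?thesis
  proof
    assume inb: "UC L v C \<in> boundary L v"
    show "\<forall>\<F>. finite \<F> \<and> \<F> \<subseteq> D0 L v \<and> \<not> covers \<F> C \<longrightarrow> (\<forall>E\<in>C. \<exists>G\<in>D0 L v. G \<subseteq> E - \<Union>\<F>)"
    proof (intro allI impI ballI)
      fix \<F> E assume F: "finite \<F> \<and> \<F> \<subseteq> D0 L v \<and> \<not> covers \<F> C" and E: "E \<in> C"
      have NNb: "E - \<Union>\<F> \<in> Nb L v C" unfolding Nb_def using F E by blast
      have NR: "E - \<Union>\<F> \<in> Aring L v" using Nb_Aring[OF CD NNb] .
      have "UC L v C \<in> hat L v (E - \<Union>\<F>)" using U0 NR NNb unfolding hat_def Uexp_def by auto
      moreover have "openin (topology_generated_by ?B) (hat L v (E - \<Union>\<F>))"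
        using NR by (intro topology_generated_by_Basis) auto
      ultimately obtain y where y: "y \<in> UC L v ` Lstarstar L v" "y \<in> hat L v (E - \<Union>\<F>)"
        using inb unfolding bd in_closure_of by blast
      then obtain C' where C': "C' \<in> Lstarstar L v" "y = UC L v C'" by auto
      have C'L: "C' \<in> Lstar L v" using C'(1) by (simp add: Lstarstar_def)
      have mC': "maxfilt L v C'" using Lstarstar_maxfilt[OF LC C'(1)] .
      have fC': "D0_filter L v C'" using mC' by (simp add: maxfilt_def)
      have "E - \<Union>\<F> \<in> Uexp L v C'" using y(2) C'(2) UC_eq(1)[OF C'L] by (simp add: hat_def)
      then obtain N where N: "N \<in> Nb L v C'" "N \<subseteq> E - \<Union>\<F>" unfolding Uexp_def by auto
      then obtain E' F' where N': "N = E' - \<Union>F'" "E' \<in> C'" "finite F'" "F' \<subseteq> D0 L v" "\<not> covers F' C'"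
        unfolding Nb_def by auto
      have "\<forall>f\<in>F'. \<exists>E''. E'' \<in> C' \<and> E'' \<inter> f = {}"
      proof
        fix f assume f: "f \<in> F'"
        then have "f \<in> D0 L v" "f \<notin> C'" using N'(4) noncov_disj[OF N'(5)] by auto
        then show "\<exists>E''. E'' \<in> C' \<and> E'' \<inter> f = {}" using maxfilt_disj[OF LC mC'] by auto
      qed
      from bchoice[OF this] obtain e where e: "\<forall>f\<in>F'. e f \<in> C' \<and> e f \<inter> f = {}" by blast
      have GC: "E' \<inter> (\<Inter>f\<in>F'. e f) \<in> C'" using filter_finite_Int[OF fC' N'(2) N'(3)] e by simp
      have "E' \<inter> (\<Inter>f\<in>F'. e f) \<in> D0 L v" using GC filt_sub[OF fC'] by auto
      moreover have "E' \<inter> (\<Inter>f\<in>F'. e f) \<subseteq> N"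
      proof
        fix x assume x: "x \<in> E' \<inter> (\<Inter>f\<in>F'. e f)"
        have "x \<notin> \<Union>F'"
        proof
          assume "x \<in> \<Union>F'"
          then obtain f where f: "f \<in> F'" "x \<in> f" by auto
          then have "x \<in> e f" using x by auto
          then show False using e f by auto
        qed
        then show "x \<in> N" using x N'(1) by auto
      qed
      ultimately show "\<exists>G\<in>D0 L v. G \<subseteq> E - \<Union>\<F>" using N(2) by blast
    qed
  next
    assume cond: "\<forall>\<F>. finite \<F> \<and> \<F> \<subseteq> D0 L v \<and> \<not> covers \<F> C \<longrightarrow> (\<forall>E\<in>C. \<exists>G\<in>D0 L v. G \<subseteq> E - \<Union>\<F>)"
    have top: "UC L v C \<in> topspace (topology_generated_by ?B)"
    proof -
      obtain E0 where E0: "E0 \<in> C" using filt_ne[OF Lstar_D[OF CL]] by auto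
      have E0R: "E0 \<in> Aring L v" using E0 CD D0_Aring[of L v] by auto
      have "E0 \<in> UC L v C" using E0 Uexp_trace[OF CL] U0(1) by auto
      then have "UC L v C \<in> hat L v E0" using U0(2) by (simp add: hat_def)
      then show ?thesis using E0R by auto
    qed
    have "\<exists>y. y \<in> UC L v ` Lstarstar L v \<and> y \<in> T"
      if T: "UC L v C \<in> T" "openin (topology_generated_by ?B) T" for T
    proof -
      have "generate_topology_on ?B T" using T(2) by (simp add: openin_topology_generated_by_iff)
      from open_basic[OF this] T(1) obtain A where A: "A \<in> Aring L v" "UC L v C \<in> hat L v A" "hat L v A \<subseteq> T"
        by blast
      have "A \<in> Uexp L v C" using A(2) U0(1) by (simp add: hat_def)
      then obtain N where N: "N \<in> Nb L v C" "N \<subseteq> A" unfolding Uexp_def by auto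
      then obtain E F where NF: "N = E - \<Union>F" "E \<in> C" "finite F" "F \<subseteq> D0 L v" "\<not> covers F C"
        unfolding Nb_def by auto
      have "\<forall>E\<in>C. \<exists>G\<in>D0 L v. G \<subseteq> E - \<Union>F" using spec[where x=F, OF cond] NF(3,4,5) by simp
      then obtain G where G: "G \<in> D0 L v" "G \<subseteq> E - \<Union>F" using NF(2) by auto
      obtain C' where C': "C' \<in> Lstarstar L v" "G \<in> C'" using D0_in_Lstarstar[OF LC G(1)] by auto
      have C'L: "C' \<in> Lstar L v" using C'(1) by (simp add: Lstarstar_def)
      have GU: "G \<in> Uexp L v C'" using Uexp_trace[OF C'L] C'(2) by auto
      have rf: "ring_filter (Aring L v) (Uexp L v C')" using Uexp_filter[OF C'L] .
      have "G \<subseteq> A" using G(2) NF(1) N(2) by auto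
      then have "A \<in> Uexp L v C'" using rf_up[OF rf GU A(1)] by simp
      then have "UC L v C' \<in> hat L v A" using UC_eq[OF C'L] by (simp add: hat_def)
      then have "UC L v C' \<in> T" using A(3) by auto
      moreover have "UC L v C' \<in> UC L v ` Lstarstar L v" using C'(1) by auto
      ultimately show ?thesis by auto
    qed
    then show "UC L v C \<in> boundary L v"
      unfolding bd in_closure_of using top by auto
  qed
qed


end
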